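(* Let $\mathfrak g=\mathfrak{hsp}_{2n}(\mathbb R)=\mathfrak g(\mathfrak{sp}_{2n}(\mathbb R),\mathbb R^{2n},\mathbb R,\omega)$ and let $x\in\mathfrak g$ be such that $C_x$ is pointed. Then $x$ is contained in a pointed generating $\operatorname{Inn}(\mathfrak g)$-invariant closed convex cone $W\subseteq\mathfrak g$.
   Context: $\omega$ is the standard symplectic form on $\mathbb R^{2n}$; $\mathfrak g(\mathfrak l,V,\mathfrak z,\beta)=\mathfrak z\oplus V\oplus\mathfrak l$ with bracket $[(z,v,x),(z',v',x')]=(\beta(v,v'),x.v'-x'.v,[x,x'])$, here with $\mathfrak l=\mathfrak{sp}_{2n}(\mathbb R)$ acting naturally on $V=\mathbb R^{2n}$, $\mathfrak z=\mathbb R$, $\beta=\omega$ (the Jacobi Lie algebra). $\operatorname{Inn}(\mathfrak g)=\langle e^{\operatorname{ad}\mathfrak g}\rangle$; $C_x$ is the closed convex cone generated by $\operatorname{Inn}(\mathfrak g)x$; pointed = contains no affine line; generating = spans $\mathfrak g$. *)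

theory Defs
  imports "HOL-Analysis.Analysis"
begin

text \<open>V = R^{2n} modelled as real^('n + 'n) (coordinates q_1..q_n, p_1..p_n);
  the Jacobi algebra hsp_{2n}(R) = R (+) V (+) sp_{2n}(R) is realised inside the
  Euclidean space real \<times> V \<times> (2n\<times>2n matrices).\<close>

type_synonym 'n vec2 = "real ^ ('n + 'n)"
type_synonym 'n mat2 = "real ^ ('n + 'n) ^ ('n + 'n)"
type_synonym 'n jac = "real \<times> 'n vec2 \<times> 'n mat2"

definition symJ :: "('n::finite) mat2" where
  "symJ = (\<chi> i j. (case (i, j) of
      (Inl a, Inr b) \<Rightarrow> (if a = b then 1 else 0)
    | (Inr a, Inl b) \<Rightarrow> (if a = b then -1 else 0)
    | _ \<Rightarrow> 0))"

definition omega :: "('n::finite) vec2 \<Rightarrow> 'n vec2 \<Rightarrow> real" where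
  "omega v w = v \<bullet> (symJ *v w)"

definition sp :: "('n::finite) mat2 set" where
  "sp = {X. transpose X ** symJ + symJ ** X = 0}"

definition hsp :: "('n::finite) jac set" where
  "hsp = {(z, v, X). X \<in> sp}"

definition br :: "('n::finite) jac \<Rightarrow> 'n jac \<Rightarrow> 'n jac" where
  "br a b = (case a of (z, v, X) \<Rightarrow> case b of (z', v', X') \<Rightarrow>
     (omega v v', X *v v' - X' *v v, X ** X' - X' ** X))"

definition expad :: "('n::finite) jac \<Rightarrow> 'n jac \<Rightarrow> 'n jac" where
  "expad y u = (\<Sum>k. (inverse (fact k) :: real) *\<^sub>R ((br y ^^ k) u))"

text \<open>Inn(g): the group generated by the e^{ad y}, y in g (closed under inverses
  since e^{ad y}^{-1} = e^{ad(-y)}, so the generated monoid is the generated group)\<close>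
inductive_set Inn :: "(('n::finite) jac \<Rightarrow> 'n jac) set" where
  Inn_id: "id \<in> Inn"
| Inn_step: "y \<in> hsp \<Longrightarrow> \<phi> \<in> Inn \<Longrightarrow> (\<lambda>u. expad y (\<phi> u)) \<in> Inn"

definition Cx :: "('n::finite) jac \<Rightarrow> 'n jac set" where
  "Cx x = closure (convex_cone hull ((\<lambda>\<phi>. \<phi> x) ` Inn))"

definition pointed :: "'a::real_vector set \<Rightarrow> bool" where
  "pointed C \<longleftrightarrow> \<not> (\<exists>a d. d \<noteq> 0 \<and> (\<forall>t::real. a + t *\<^sub>R d \<in> C))"

end

theory Submission
  imports Defs
begin


lemma symJ_Inl: "(symJ *v w) $ Inl a = w $ Inr a"
proof -
  have "(symJ *v w) $ Inl a = (\<Sum>j\<in>UNIV. (if j = Inr a then w $ j else 0))"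
    unfolding matrix_vector_mult_def symJ_def
    apply (simp only: vec_lambda_beta)
    apply (rule sum.cong, simp)
    by (auto split: sum.splits)
  also have "\<dots> = w $ Inr a" by (simp add: sum.delta')
  finally show ?thesis .
qed

lemma symJ_Inr: "(symJ *v w) $ Inr a = - w $ Inl a"
proof -
  have "(symJ *v w) $ Inr a = (\<Sum>j\<in>UNIV. (if j = Inl a then - w $ j else 0))"
    unfolding matrix_vector_mult_def symJ_def
    apply (simp only: vec_lambda_beta)
    apply (rule sum.cong, simp)
    by (auto split: sum.splits)
  also have "\<dots> = - w $ Inl a" by (simp add: sum.delta')
  finally show ?thesis .
qed

lemma symJJ: "symJ *v (symJ *v w) = - (w :: real^('n::finite + 'n))"
  unfolding vec_eq_iff
proof
  fix i show "(symJ *v (symJ *v w)) $ i = (- w) $ i"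
    by (cases i) (simp_all add: symJ_Inl symJ_Inr)
qed

lemma inner_sum_type: "(v::real^('n::finite+'n)) \<bullet> w = (\<Sum>a\<in>UNIV. v $ Inl a * w $ Inl a) + (\<Sum>a\<in>UNIV. v $ Inr a * w $ Inr a)"
proof -
  have "v \<bullet> w = (\<Sum>i\<in>UNIV. v $ i * w $ i)" by (simp add: inner_vec_def)
  also have "\<dots> = (\<Sum>i\<in>Inl ` UNIV \<union> Inr ` UNIV. v $ i * w $ i)"
    by (metis UNIV_Plus_UNIV Plus_def)
  also have "\<dots> = (\<Sum>i\<in>Inl ` (UNIV::'n set). v $ i * w $ i) + (\<Sum>i\<in>Inr ` (UNIV::'n set). v $ i * w $ i)"
    by (rule sum.union_disjoint) auto
  also have "\<dots> = (\<Sum>a\<in>UNIV. v $ Inl a * w $ Inl a) + (\<Sum>a\<in>UNIV. v $ Inr a * w $ Inr a)" by (simp add: sum.reindex)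
  finally show ?thesis .
qed

lemma symJ_antisym: "v \<bullet> (symJ *v w) = - ((symJ *v v) \<bullet> (w::real^('n::finite+'n)))"
  by (simp add: inner_sum_type symJ_Inl symJ_Inr sum_negf[symmetric] mult.commute)


lemma inner_mv_transpose: "(A *v p) \<bullet> (q::real^'m::finite) = p \<bullet> (transpose A *v q)"
  by (metis dot_lmul_matrix inner_commute transpose_matrix_vector)

lemma sp_vec: "X \<in> sp \<longleftrightarrow> (\<forall>w. transpose X *v (symJ *v w) = - (symJ *v (X *v w)))"
proof -
  have "X \<in> sp \<longleftrightarrow> (\<forall>w. (transpose X ** symJ + symJ ** X) *v w = 0 *v w)"
    unfolding sp_def using matrix_eq[of _ 0] by simp
  also have "\<dots> \<longleftrightarrow> (\<forall>w. transpose X *v (symJ *v w) = - (symJ *v (X *v w)))"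
    by (simp add: matrix_vector_mult_add_rdistrib matrix_vector_mul_assoc eq_neg_iff_add_eq_0)
  finally show ?thesis .
qed

lemma sp_omega: "X \<in> sp \<Longrightarrow> (X *v p) \<bullet> (symJ *v q) = - (p \<bullet> (symJ *v (X *v q)))"
  by (simp add: inner_mv_transpose sp_vec)

lemma sp_sym: "X \<in> sp \<Longrightarrow> p \<bullet> (symJ *v (X *v q)) = q \<bullet> (symJ *v (X *v p))"
  by (metis sp_omega symJ_antisym inner_commute minus_minus)

lemma omega_antisym: "omega v w = - omega w v"
  unfolding omega_def by (metis symJ_antisym inner_commute)

lemma sp_subspace: "subspace sp"
  unfolding subspace_def sp_def
  apply (auto simp: transpose_def vec_eq_iff matrix_matrix_mult_def sum.distrib ring_distribs)
  subgoal for x y i j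
    by (drule spec[of _ i], drule spec[of _ j], drule spec[of _ i], drule spec[of _ j]) linarith
  subgoal for c x i j
  proof -
    assume h: "\<forall>i ia. (\<Sum>k\<in>UNIV. x $ k $ i * symJ $ k $ ia) + (\<Sum>k\<in>UNIV. symJ $ i $ k * x $ k $ ia) = 0"
    have "(\<Sum>k\<in>UNIV. c * (x $ k $ i * symJ $ k $ j)) + (\<Sum>k\<in>UNIV. symJ $ i $ k * (c * x $ k $ j))
       = c * ((\<Sum>k\<in>UNIV. x $ k $ i * symJ $ k $ j) + (\<Sum>k\<in>UNIV. symJ $ i $ k * x $ k $ j))"
      by (simp add: sum_distrib_left distrib_left mult.left_commute)
    then show ?thesis using h by (simp add: mult.assoc)
  qed
  done


lemma mm_add_r: "((A::real^'m::finite^'k::finite) + B) ** (C::real^'p::finite^'m) = A ** C + B ** C"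
  by (rule matrix_eq[THEN iffD2]) (simp add: matrix_vector_mul_assoc[symmetric] matrix_vector_mult_add_rdistrib)
lemma mm_diff_r: "((A::real^'m::finite^'k::finite) - B) ** (C::real^'p::finite^'m) = A ** C - B ** C"
  by (rule matrix_eq[THEN iffD2]) (simp add: matrix_vector_mul_assoc[symmetric] matrix_vector_mult_diff_rdistrib)
lemma mm_diff_l: "(C::real^'m::finite^'k::finite) ** ((A::real^'p::finite^'m) - B) = C ** A - C ** B"
  by (rule matrix_eq[THEN iffD2]) (simp add: matrix_vector_mul_assoc[symmetric] matrix_vector_mult_diff_rdistrib matrix_vector_mult_diff_distrib)
lemma transpose_add: "transpose (A + B) = transpose A + transpose B"
  by (simp add: transpose_def vec_eq_iff)
lemma transpose_diff: "transpose (A - B) = transpose A - transpose B"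
  by (simp add: transpose_def vec_eq_iff)

lemma mv_neg: "(A::real^'m::finite^'k::finite) *v (- x) = - (A *v x)"
  by (metis add_eq_0_iff matrix_vector_right_distrib matrix_vector_mult_0_right)

definition Hb :: "('n::finite) jac \<Rightarrow> real \<times> 'n vec2 \<Rightarrow> real \<times> 'n vec2 \<Rightarrow> real" where
 "Hb u p q = fst p * fst q * fst u + (fst p * omega (fst (snd u)) (snd q) + fst q * omega (fst (snd u)) (snd p)) / 2
    - (snd p \<bullet> (symJ *v (snd (snd u) *v snd q))) / 2"

definition Mop :: "('n::finite) jac \<Rightarrow> real \<times> 'n vec2 \<Rightarrow> real \<times> 'n vec2" where
 "Mop y p = (0, - (snd (snd y) *v snd p + fst p *\<^sub>R fst (snd y)))"

lemma br_simp: "br (c,a,Y) (z,v,X) = (omega a v, Y *v v - X *v a, Y ** X - X ** Y)"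
  by (simp add: br_def)

lemma hsp_iff: "(z,v,X) \<in> hsp \<longleftrightarrow> X \<in> sp" by (simp add: hsp_def)

lemma br_hsp: assumes "y \<in> hsp" "u \<in> hsp" shows "br y u \<in> hsp"
proof -
  obtain c a Y where y: "y = (c,a,Y)" by (metis prod.exhaust)
  obtain z v X where u: "u = (z,v,X)" by (metis prod.exhaust)
  have Y: "Y \<in> sp" and X: "X \<in> sp" using assms y u by (auto simp: hsp_def)
  have XX: "transpose X *v (symJ *v w) = - (symJ *v (X *v w))" for w using X sp_vec by blast
  have YY: "transpose Y *v (symJ *v w) = - (symJ *v (Y *v w))" for w using Y sp_vec by blast
  have "Y ** X - X ** Y \<in> sp"
    unfolding sp_vec
    by (simp del: transpose_matrix_vector add: transpose_diff matrix_transpose_mul matrix_vector_mult_diff_rdistrib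
          matrix_vector_mul_assoc[symmetric] XX YY mv_neg matrix_vector_mult_diff_distrib)
  then show ?thesis by (simp add: y u br_simp hsp_def)
qed

lemma Hb_br: assumes "y \<in> hsp" "u \<in> hsp"
  shows "Hb (br y u) p q = Hb u (Mop y p) q + Hb u p (Mop y q)"
proof -
  obtain c a Y where y: "y = (c,a,Y)" by (metis prod.exhaust)
  obtain z v X where u: "u = (z,v,X)" by (metis prod.exhaust)
  obtain s1 x1 where p: "p = (s1,x1)" by (metis prod.exhaust)
  obtain s2 x2 where q: "q = (s2,x2)" by (metis prod.exhaust)
  have Y: "Y \<in> sp" and X: "X \<in> sp" using assms y u by (auto simp: hsp_def)
  have f1: "(Y *v v) \<bullet> (symJ *v w) = - (v \<bullet> (symJ *v (Y *v w)))" for w using sp_omega[OF Y] .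
  have f2: "(X *v a) \<bullet> (symJ *v w) = - (a \<bullet> (symJ *v (X *v w)))" for w using sp_omega[OF X] .
  have f3: "(Y *v x1) \<bullet> (symJ *v (X *v x2)) = - (x1 \<bullet> (symJ *v (Y *v (X *v x2))))" using sp_omega[OF Y] .
  have f4: "a \<bullet> (symJ *v (X *v w)) = w \<bullet> (symJ *v (X *v a))" for w using sp_sym[OF X] .
  have f5: "a \<bullet> (symJ *v v) = - (v \<bullet> (symJ *v a))" using omega_antisym unfolding omega_def .
  show ?thesis
    unfolding y u p q Hb_def Mop_def br_simp omega_def
    apply (simp add: inner_add_left inner_add_right inner_diff_left inner_diff_right
       matrix_vector_mult_diff_rdistrib matrix_vector_mul_assoc[symmetric] matrix_vector_right_distrib
       matrix_vector_mult_scaleR mv_neg algebra_simps)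
    using f1[of x1] f1[of x2] f2[of x1] f2[of x2] f3 f4[of x1] f4[of x2] f5
    by (simp add: field_simps)
qed


definition expL :: "('a::euclidean_space \<Rightarrow> 'a) \<Rightarrow> 'a \<Rightarrow> 'a" where
  "expL f u = (\<Sum>k. (inverse (fact k) :: real) *\<^sub>R ((f ^^ k) u))"

lemma linear_funpow: "linear (f::'a::real_vector \<Rightarrow> 'a) \<Longrightarrow> linear (f ^^ k)"
proof (induction k)
  case 0 then show ?case by (simp add: linear_id funpow.simps(1) id_def module_hom_ident)
next
  case (Suc k) then show ?case using linear_compose[of "f^^k" f] by (simp add: o_def)
qed

lemma funpow_bound:
  fixes f :: "'a::real_normed_vector \<Rightarrow> 'a"
  assumes "\<And>x. norm (f x) \<le> norm x * K" "0 \<le> K"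
  shows "norm ((f ^^ k) u) \<le> norm u * K ^ k"
proof (induction k)
  case 0 then show ?case by simp
next
  case (Suc k)
  have "norm ((f ^^ Suc k) u) \<le> norm ((f ^^ k) u) * K" using assms(1) by simp
  also have "\<dots> \<le> norm u * K ^ k * K" using Suc assms(2) by (simp add: mult_right_mono)
  finally show ?case by (simp add: ac_simps)
qed

lemma expL_summable_norm:
  fixes f :: "'a::euclidean_space \<Rightarrow> 'a"
  assumes "linear f"
  shows "summable (\<lambda>k. norm ((inverse (fact k) :: real) *\<^sub>R ((f ^^ k) u)))"
proof -
  have "bounded_linear f" using assms linear_conv_bounded_linear by blast
  then obtain K where K: "\<And>x. norm (f x) \<le> norm x * K" "0 < K"
    using bounded_linear.pos_bounded by blast
  show ?thesis
  proof (rule summable_comparison_test[where g = "\<lambda>k. norm u * (inverse (fact k) * K ^ k)"])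
    show "summable (\<lambda>k. norm u * (inverse (fact k) * K ^ k))"
      by (rule summable_mult[OF summable_exp])
    show "\<exists>N. \<forall>n\<ge>N. norm (norm (inverse (fact n) *\<^sub>R (f ^^ n) u)) \<le> norm u * (inverse (fact n) * K ^ n)"
    proof (intro exI[of _ 0] allI impI)
      fix n :: nat
      have "norm (norm (inverse (fact n) *\<^sub>R (f ^^ n) u)) = inverse (fact n) * norm ((f^^n) u)" by simp
      also have "\<dots> \<le> inverse (fact n) * (norm u * K^n)"
        by (rule mult_left_mono[OF funpow_bound[OF K(1) less_imp_le[OF K(2)]]]) simp
      finally show "norm (norm (inverse (fact n) *\<^sub>R (f ^^ n) u)) \<le> norm u * (inverse (fact n) * K ^ n)"
        by (simp add: ac_simps)
    qed
  qed
qed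

lemma expL_summable: "linear (f::'a::euclidean_space \<Rightarrow> 'a) \<Longrightarrow> summable (\<lambda>k. (inverse (fact k) :: real) *\<^sub>R ((f ^^ k) u))"
  by (rule summable_norm_cancel[OF expL_summable_norm])

lemma expL_blin:
  fixes f :: "'a::euclidean_space \<Rightarrow> 'a" and g :: "'a \<Rightarrow> 'b::real_normed_vector"
  assumes "linear f" "bounded_linear g"
  shows "g (expL f u) = (\<Sum>k. (inverse (fact k) :: real) *\<^sub>R g ((f ^^ k) u))"
proof -
  have "g (expL f u) = (\<Sum>k. g ((inverse (fact k) :: real) *\<^sub>R ((f ^^ k) u)))"
    unfolding expL_def by (rule bounded_linear.suminf[OF assms(2) expL_summable[OF assms(1)]])
  also have "\<dots> = (\<Sum>k. (inverse (fact k) :: real) *\<^sub>R g ((f ^^ k) u))"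
    by (rule suminf_cong) (rule linear_scale[OF bounded_linear.linear[OF assms(2)]])
  finally show ?thesis .
qed

lemma expL_linear:
  fixes f :: "'a::euclidean_space \<Rightarrow> 'a"
  assumes "linear f" shows "linear (expL f)"
proof (rule linearI)
  fix u v
  have l: "linear (f ^^ k)" for k using linear_funpow assms by blast
  have "expL f u + expL f v = (\<Sum>k. (inverse (fact k) :: real) *\<^sub>R ((f ^^ k) u) + (inverse (fact k) :: real) *\<^sub>R ((f ^^ k) v))"
    unfolding expL_def by (rule suminf_add[OF expL_summable[OF assms] expL_summable[OF assms]])
  also have "\<dots> = expL f (u + v)"
    unfolding expL_def
    by (rule suminf_cong) (simp add: linear_add[OF l] scaleR_add_right)
  finally show "expL f (u + v) = expL f u + expL f v" by simp
next
  fix c :: real and u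
  have l: "linear (f ^^ k)" for k using linear_funpow assms by blast
  have "c *\<^sub>R expL f u = (\<Sum>k. c *\<^sub>R ((inverse (fact k) :: real) *\<^sub>R ((f ^^ k) u)))"
    unfolding expL_def by (rule suminf_scaleR_right[OF expL_summable[OF assms]])
  also have "\<dots> = expL f (c *\<^sub>R u)"
    unfolding expL_def
    by (rule suminf_cong) (simp add: linear_scale[OF l])
  finally show "expL f (c *\<^sub>R u) = c *\<^sub>R expL f u" by simp
qed

lemma expL_in_subspace:
  fixes f :: "'a::euclidean_space \<Rightarrow> 'a"
  assumes "linear f" "subspace S" "\<And>x. x \<in> S \<Longrightarrow> f x \<in> S" "u \<in> S"
  shows "expL f u \<in> S"
proof -
  have cl: "closed S" using closed_subspace assms(2) by blast
  have fk: "(f ^^ k) u \<in> S" for k by (induction k) (use assms in auto)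
  have lim: "(\<lambda>n. \<Sum>k<n. (inverse (fact k) :: real) *\<^sub>R ((f ^^ k) u)) \<longlonglongrightarrow> expL f u"
    unfolding expL_def by (rule summable_LIMSEQ[OF expL_summable[OF assms(1)]])
  have inS: "(\<Sum>k<n. (inverse (fact k) :: real) *\<^sub>R ((f ^^ k) u)) \<in> S" for n
    by (rule subspace_sum[OF assms(2)]) (rule subspace_scale[OF assms(2) fk])
  show ?thesis
    using closed_sequential_limits[THEN iffD1, OF cl, rule_format, OF conjI[OF allI[OF inS] lim]] .
qed

lemma expad_expL: "expad y = expL (br y)"
  unfolding expad_def expL_def by (rule ext) simp


lemma scaleR_mv: "(k *\<^sub>R (A::real^'m::finite^'k::finite)) *v x = k *\<^sub>R (A *v x)"
  by (simp add: scaleR_matrix_vector_assoc)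

lemma mm_scaleR_r: "(k *\<^sub>R (A::real^'m::finite^'k::finite)) ** (B::real^'p::finite^'m) = k *\<^sub>R (A ** B)"
  by (rule matrix_eq[THEN iffD2]) (simp add: matrix_vector_mul_assoc[symmetric] scaleR_mv)
lemma mm_scaleR_l: "(A::real^'m::finite^'k::finite) ** (k *\<^sub>R (B::real^'p::finite^'m)) = k *\<^sub>R (A ** B)"
  by (rule matrix_eq[THEN iffD2]) (simp add: matrix_vector_mul_assoc[symmetric] scaleR_mv matrix_vector_mult_scaleR)

lemma br_linear: "linear (br (y::'n::finite jac))"
proof (rule linearI)
  fix u w :: "'n jac"
  obtain c a Y where y: "y = (c,a,Y)" by (metis prod.exhaust)
  obtain z v X where u: "u = (z,v,X)" by (metis prod.exhaust)
  obtain z' v' X' where w: "w = (z',v',X')" by (metis prod.exhaust)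
  show "br y (u + w) = br y u + br y w"
    by (simp add: y u w br_simp omega_def inner_add_right matrix_vector_right_distrib
        matrix_vector_mult_add_rdistrib matrix_add_ldistrib mm_add_r)
next
  fix k :: real and u :: "'n jac"
  obtain c a Y where y: "y = (c,a,Y)" by (metis prod.exhaust)
  obtain z v X where u: "u = (z,v,X)" by (metis prod.exhaust)
  show "br y (k *\<^sub>R u) = k *\<^sub>R br y u"
    by (simp add: y u br_simp omega_def matrix_vector_mult_scaleR scaleR_mv mm_scaleR_r mm_scaleR_l
       scaleR_right_diff_distrib)
qed

lemma Hb_lin_u: "linear (\<lambda>u::'a::finite jac. Hb u p q)"
proof (rule linearI)
  fix u w :: "'a::finite jac"
  show "Hb (u + w) p q = Hb u p q + Hb w p q"
    by (simp add: Hb_def omega_def inner_add_left inner_add_right matrix_vector_mult_add_rdistrib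
       matrix_vector_right_distrib field_simps)
next
  fix k :: real and u :: "'a::finite jac"
  show "Hb (k *\<^sub>R u) p q = k *\<^sub>R Hb u p q"
    by (simp add: Hb_def omega_def scaleR_mv matrix_vector_mult_scaleR field_simps)
qed

lemma Hb_lin_p: "linear (\<lambda>p. Hb (u::'a::finite jac) p q)"
proof (rule linearI)
  fix p p' :: "real \<times> 'a::finite vec2"
  show "Hb u (p + p') q = Hb u p q + Hb u p' q"
    by (simp add: Hb_def omega_def inner_add_left inner_add_right matrix_vector_mult_add_rdistrib
       matrix_vector_right_distrib field_simps)
next
  fix k :: real and p :: "real \<times> 'a::finite vec2"
  show "Hb u (k *\<^sub>R p) q = k *\<^sub>R Hb u p q"
    by (simp add: Hb_def omega_def scaleR_mv matrix_vector_mult_scaleR field_simps)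
qed

lemma Hb_lin_q: "linear (\<lambda>q. Hb (u::'a::finite jac) p q)"
proof (rule linearI)
  fix q q' :: "real \<times> 'a::finite vec2"
  show "Hb u p (q + q') = Hb u p q + Hb u p q'"
    by (simp add: Hb_def omega_def inner_add_left inner_add_right matrix_vector_mult_add_rdistrib
       matrix_vector_right_distrib field_simps)
next
  fix k :: real and q :: "real \<times> 'a::finite vec2"
  show "Hb u p (k *\<^sub>R q) = k *\<^sub>R Hb u p q"
    by (simp add: Hb_def omega_def scaleR_mv matrix_vector_mult_scaleR field_simps)
qed

lemma Mop_linear: "linear (Mop (y::'a::finite jac))"
proof (rule linearI)
  fix p p' :: "real \<times> 'a::finite vec2"
  show "Mop y (p + p') = Mop y p + Mop y p'"
    by (simp add: Mop_def matrix_vector_right_distrib scaleR_add_left)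
next
  fix k :: real and p :: "real \<times> 'a::finite vec2"
  show "Mop y (k *\<^sub>R p) = k *\<^sub>R Mop y p"
    by (simp add: Mop_def matrix_vector_mult_scaleR scaleR_add_right scaleR_diff_right)
qed

lemma binom_step:
  fixes F :: "nat \<Rightarrow> nat \<Rightarrow> real"
  shows "(\<Sum>r\<le>k. real (k choose r) * F (Suc r) (k - r)) + (\<Sum>r\<le>k. real (k choose r) * F r (Suc k - r))
       = (\<Sum>r\<le>Suc k. real (Suc k choose r) * F r (Suc k - r))"
proof -
  have A: "(\<Sum>r\<le>Suc k. real (Suc k choose r) * F r (Suc k - r))
     = F 0 (Suc k) + (\<Sum>r\<le>k. real (k choose r) * F (Suc r) (k - r)) + (\<Sum>r\<le>k. real (k choose Suc r) * F (Suc r) (k - r))"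
    by (subst sum.atMost_Suc_shift) (simp add: ring_distribs sum.distrib)
  have B: "(\<Sum>r\<le>k. real (k choose r) * F r (Suc k - r))
     = (\<Sum>r\<le>Suc k. real (k choose r) * F r (Suc k - r))"
    by simp
  also have "\<dots> = F 0 (Suc k) + (\<Sum>r\<le>k. real (k choose Suc r) * F (Suc r) (k - r))"
    by (subst sum.atMost_Suc_shift) simp
  finally show ?thesis using A by simp
qed


lemma bil_repr:
  fixes B :: "'e::euclidean_space \<Rightarrow> 'e \<Rightarrow> real"
  assumes l1: "\<And>q. linear (\<lambda>p. B p q)" and l2: "\<And>p. linear (B p)"
  shows "B p q = (\<Sum>i\<in>Basis. \<Sum>j\<in>Basis. (p \<bullet> i) * (q \<bullet> j) * B i j)"
proof -
  have "B p q = B (\<Sum>i\<in>Basis. (p \<bullet> i) *\<^sub>R i) q" by (simp add: euclidean_representation)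
  also have "\<dots> = (\<Sum>i\<in>Basis. (p \<bullet> i) * B i q)"
    by (simp add: linear_sum[OF l1] linear_scale[OF l1])
  also have "\<dots> = (\<Sum>i\<in>Basis. (p \<bullet> i) * B i (\<Sum>j\<in>Basis. (q \<bullet> j) *\<^sub>R j))" by (simp add: euclidean_representation)
  also have "\<dots> = (\<Sum>i\<in>Basis. \<Sum>j\<in>Basis. (p \<bullet> i) * (q \<bullet> j) * B i j)"
    by (simp add: linear_sum[OF l2] linear_scale[OF l2] sum_distrib_left mult.assoc)
  finally show ?thesis .
qed

lemma bil_cauchy:
  fixes B :: "'e::euclidean_space \<Rightarrow> 'e \<Rightarrow> real" and a b :: "nat \<Rightarrow> 'e"
  assumes l1: "\<And>q. linear (\<lambda>p. B p q)" and l2: "\<And>p. linear (B p)"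
    and sa: "summable (\<lambda>k. norm (a k))" and sb: "summable (\<lambda>k. norm (b k))"
  shows "(\<lambda>k. \<Sum>r\<le>k. B (a r) (b (k - r))) sums B (suminf a) (suminf b)"
proof -
  have sai: "summable (\<lambda>k. norm (a k \<bullet> i))" if "i \<in> Basis" for i
    by (rule summable_comparison_test[OF _ sa]) (use that in \<open>auto intro!: exI[of _ 0] simp: Basis_le_norm\<close>)
  have sbj: "summable (\<lambda>k. norm (b k \<bullet> j))" if "j \<in> Basis" for j
    by (rule summable_comparison_test[OF _ sb]) (use that in \<open>auto intro!: exI[of _ 0] simp: Basis_le_norm\<close>)
  have ea: "suminf a \<bullet> i = (\<Sum>k. a k \<bullet> i)" for i
    using bounded_linear.suminf[OF bounded_linear_inner_left summable_norm_cancel[OF sa]] .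
  have eb: "suminf b \<bullet> j = (\<Sum>k. b k \<bullet> j)" for j
    using bounded_linear.suminf[OF bounded_linear_inner_left summable_norm_cancel[OF sb]] .
  have cp: "(\<lambda>k. \<Sum>r\<le>k. (a r \<bullet> i) * (b (k - r) \<bullet> j)) sums ((suminf a \<bullet> i) * (suminf b \<bullet> j))"
    if "i \<in> Basis" "j \<in> Basis" for i j
    unfolding ea eb by (rule Cauchy_product_sums[OF sai[OF that(1)] sbj[OF that(2)]])
  have "(\<lambda>k. \<Sum>i\<in>Basis. \<Sum>j\<in>Basis. B i j * (\<Sum>r\<le>k. (a r \<bullet> i) * (b (k - r) \<bullet> j)))
      sums (\<Sum>i\<in>Basis. \<Sum>j\<in>Basis. B i j * ((suminf a \<bullet> i) * (suminf b \<bullet> j)))"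
    by (intro sums_sum sums_mult cp)
  moreover have "(\<Sum>i\<in>Basis. \<Sum>j\<in>Basis. B i j * (\<Sum>r\<le>k. (a r \<bullet> i) * (b (k - r) \<bullet> j)))
      = (\<Sum>r\<le>k. B (a r) (b (k - r)))" for k
  proof -
    have "(\<Sum>r\<le>k. B (a r) (b (k - r))) = (\<Sum>r\<le>k. \<Sum>i\<in>Basis. \<Sum>j\<in>Basis. (a r \<bullet> i) * (b (k - r) \<bullet> j) * B i j)"
      by (rule sum.cong[OF refl]) (rule bil_repr[OF l1 l2])
    also have "\<dots> = (\<Sum>i\<in>Basis. \<Sum>j\<in>Basis. \<Sum>r\<le>k. (a r \<bullet> i) * (b (k - r) \<bullet> j) * B i j)"
      by (simp add: sum.swap[of _ "{..k}"])
    also have "\<dots> = (\<Sum>i\<in>Basis. \<Sum>j\<in>Basis. B i j * (\<Sum>r\<le>k. (a r \<bullet> i) * (b (k - r) \<bullet> j)))"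
      by (simp add: sum_distrib_left mult.commute)
    finally show ?thesis by simp
  qed
  moreover have "(\<Sum>i\<in>Basis. \<Sum>j\<in>Basis. B i j * ((suminf a \<bullet> i) * (suminf b \<bullet> j))) = B (suminf a) (suminf b)"
    by (subst bil_repr[OF l1 l2, of "suminf a" "suminf b"]) (simp add: mult.commute)
  ultimately show ?thesis by simp
qed


lemma hsp_subspace: "subspace (hsp :: ('n::finite) jac set)"
  using sp_subspace unfolding subspace_def hsp_def by (auto simp: zero_prod_def)

lemma funpow_br_hsp: "y \<in> hsp \<Longrightarrow> u \<in> hsp \<Longrightarrow> (br y ^^ k) u \<in> hsp"
  by (induction k) (auto intro: br_hsp)

lemma Hb_pow:
  assumes "y \<in> hsp" "u \<in> hsp"
  shows "Hb ((br y ^^ k) u) p q = (\<Sum>r\<le>k. real (k choose r) * Hb u ((Mop y ^^ r) p) ((Mop y ^^ (k - r)) q))"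
proof (induction k arbitrary: p q)
  case 0 then show ?case by simp
next
  case (Suc k)
  have "Hb ((br y ^^ Suc k) u) p q = Hb (br y ((br y ^^ k) u)) p q" by simp
  also have "\<dots> = Hb ((br y ^^ k) u) (Mop y p) q + Hb ((br y ^^ k) u) p (Mop y q)"
    by (rule Hb_br[OF assms(1) funpow_br_hsp[OF assms]])
  also have "\<dots> = (\<Sum>r\<le>k. real (k choose r) * Hb u ((Mop y ^^ Suc r) p) ((Mop y ^^ (k - r)) q))
                 + (\<Sum>r\<le>k. real (k choose r) * Hb u ((Mop y ^^ r) p) ((Mop y ^^ (Suc k - r)) q))"
  proof -
    have e1: "(Mop y ^^ r) (Mop y p) = (Mop y ^^ Suc r) p" for r by (simp add: funpow_swap1)
    have e2: "(Mop y ^^ (k - r)) (Mop y q) = (Mop y ^^ (Suc k - r)) q" if "r \<le> k" for r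
      using that by (simp add: Suc_diff_le funpow_swap1)
    show ?thesis
      unfolding Suc.IH e1
      by (intro arg_cong2[where f="(+)"] refl sum.cong) (simp_all add: e2)
  qed
  also have "\<dots> = (\<Sum>r\<le>Suc k. real (Suc k choose r) * Hb u ((Mop y ^^ r) p) ((Mop y ^^ (Suc k - r)) q))"
    by (rule binom_step)
  finally show ?case .
qed

lemma Hb_scale: "Hb u (c *\<^sub>R P) (d *\<^sub>R Q) = c * d * Hb u P Q"
  by (simp add: linear_scale[OF Hb_lin_p] linear_scale[OF Hb_lin_q])

definition expM :: "('n::finite) jac \<Rightarrow> real \<times> 'n vec2 \<Rightarrow> real \<times> 'n vec2" where
  "expM y = expL (Mop y)"

lemma Hb_expad:
  assumes "y \<in> hsp" "u \<in> hsp"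
  shows "Hb (expad y u) p p = Hb u (expM y p) (expM y p)"
proof -
  define a where "a r = (inverse (fact r) :: real) *\<^sub>R (Mop y ^^ r) p" for r
  have bl: "bounded_linear (\<lambda>u. Hb u p p)" using Hb_lin_u linear_conv_bounded_linear by blast
  have "Hb (expad y u) p p = (\<Sum>k. (inverse (fact k) :: real) *\<^sub>R Hb ((br y ^^ k) u) p p)"
    unfolding expad_expL by (rule expL_blin[OF br_linear bl])
  also have "\<dots> = (\<Sum>k. \<Sum>r\<le>k. Hb u (a r) (a (k - r)))"
  proof (rule suminf_cong)
    fix k
    have "(inverse (fact k) :: real) *\<^sub>R Hb ((br y ^^ k) u) p p
       = (\<Sum>r\<le>k. inverse (fact k) * real (k choose r) * Hb u ((Mop y ^^ r) p) ((Mop y ^^ (k - r)) p))"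
      by (simp add: Hb_pow[OF assms] sum_distrib_left mult.assoc)
    also have "\<dots> = (\<Sum>r\<le>k. Hb u (a r) (a (k - r)))"
    proof (rule sum.cong[OF refl])
      fix r assume "r \<in> {..k}"
      then have rk: "r \<le> k" by simp
      have "inverse (fact k) * real (k choose r) = inverse (fact r) * inverse (fact (k - r) :: real)"
        by (simp add: binomial_fact[OF rk] field_simps)
      then show "inverse (fact k) * real (k choose r) * Hb u ((Mop y ^^ r) p) ((Mop y ^^ (k - r)) p)
           = Hb u (a r) (a (k - r))"
        unfolding a_def Hb_scale by simp
    qed
    finally show "(inverse (fact k) :: real) *\<^sub>R Hb ((br y ^^ k) u) p p = (\<Sum>r\<le>k. Hb u (a r) (a (k - r)))" .
  qed
  also have "\<dots> = Hb u (suminf a) (suminf a)"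
    by (rule sums_unique[symmetric], rule bil_cauchy[OF Hb_lin_p Hb_lin_q])
       (use expL_summable_norm[OF Mop_linear, of y p] in \<open>simp_all add: a_def\<close>)
  also have "suminf a = expM y p" unfolding a_def expM_def expL_def ..
  finally show ?thesis .
qed


definition Hval :: "('n::finite) jac \<Rightarrow> 'n vec2 \<Rightarrow> real" where
  "Hval u x = Hb u (1, x) (1, x)"

definition Qf :: "('n::finite) jac \<Rightarrow> 'n vec2 \<Rightarrow> real" where
  "Qf u x = - (x \<bullet> (symJ *v (snd (snd u) *v x))) / 2"

lemma Hval_expand: "Hval u x = fst u + omega (fst (snd u)) x + Qf u x"
  by (simp add: Hval_def Hb_def Qf_def)

lemma Qf_scale: "Qf u (s *\<^sub>R x) = s^2 * Qf u x"
  by (simp add: Qf_def matrix_vector_mult_scaleR power2_eq_square)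

lemma omega_scale: "omega v (s *\<^sub>R x) = s * omega v x"
  by (simp add: omega_def matrix_vector_mult_scaleR)

lemma Hval_scale: "Hval u (s *\<^sub>R x) = fst u + s * omega (fst (snd u)) x + s^2 * Qf u x"
  by (simp add: Hval_expand Qf_scale omega_scale)

lemma Qf_sym: "Hval u (b + w) + Hval u (b - w) - 2 * Hval u b = 2 * Qf u w"
  by (simp add: Hval_expand Qf_def omega_def inner_add_left inner_add_right inner_diff_left inner_diff_right
     matrix_vector_right_distrib matrix_vector_mult_diff_distrib field_simps)

lemma Hval_add: "Hval (u + w) x = Hval u x + Hval w x"
  using linear_add[OF Hb_lin_u] unfolding Hval_def by blast

lemma Hval_scaleR: "Hval (c *\<^sub>R u) x = c * Hval u x"
  using linear_scale[OF Hb_lin_u] unfolding Hval_def by simp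

lemma Hval_linear: "linear (\<lambda>u. Hval u x)"
  unfolding Hval_def by (rule Hb_lin_u)

lemma Qf_add: "Qf (u + w) x = Qf u x + Qf w x"
  by (simp add: Qf_def matrix_vector_mult_add_rdistrib inner_add_right matrix_vector_right_distrib field_simps)

lemma Qf_scaleR: "Qf (c *\<^sub>R u) x = c * Qf u x"
  by (simp add: Qf_def scaleR_mv matrix_vector_mult_scaleR)

lemma fst_Mop_pow: "fst ((Mop y ^^ Suc k) p) = 0"
  by (simp add: Mop_def)

lemma fst_expM: "fst (expM y p) = fst p"
proof -
  have "fst (expM y p) = (\<Sum>k. (inverse (fact k) :: real) *\<^sub>R fst ((Mop y ^^ k) p))"
    unfolding expM_def by (rule expL_blin[OF Mop_linear bounded_linear_fst])
  also have "\<dots> = (\<Sum>k\<in>{0}. (inverse (fact k) :: real) *\<^sub>R fst ((Mop y ^^ k) p))"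
  proof (rule suminf_finite)
    fix n :: nat assume "n \<notin> {0}"
    then obtain k where "n = Suc k" by (cases n) auto
    then show "(inverse (fact n) :: real) *\<^sub>R fst ((Mop y ^^ n) p) = 0" using fst_Mop_pow[where y=y and k=k and p=p] by simp
  qed simp
  finally show ?thesis by simp
qed

lemma expad_subst:
  assumes "y \<in> hsp"
  shows "\<exists>g b. linear g \<and> (\<forall>u\<in>hsp. \<forall>x. Hval (expad y u) x = Hval u (g x + b))"
proof -
  define g where "g x = snd (expM y (0, x))" for x
  define b where "b = snd (expM y (1, 0))"
  have le: "linear (expM y)" unfolding expM_def by (rule expL_linear[OF Mop_linear])
  have lg: "linear g"
  proof -
    have "linear (\<lambda>x::'a vec2. (0::real, x))" by (rule linearI) auto
    then have "linear (snd \<circ> (expM y \<circ> (\<lambda>x::'a vec2. (0::real, x))))"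
      by (intro linear_compose[OF _ linear_snd] linear_compose[OF _ le])
    then show ?thesis unfolding g_def o_def by simp
  qed
  have ex: "expM y (1, x) = (1, g x + b)" for x
  proof -
    have "expM y (1, x) = expM y (1, 0) + expM y (0, x)"
      using linear_add[OF le, of "(1,0)" "(0,x)"] by simp
    then have "snd (expM y (1, x)) = g x + b" unfolding g_def b_def by (simp add: add.commute)
    moreover have "fst (expM y (1, x)) = 1" by (simp add: fst_expM)
    ultimately show ?thesis by (metis prod.collapse)
  qed
  show ?thesis
    by (rule exI[of _ g], rule exI[of _ b]) (simp add: lg Hval_def Hb_expad[OF assms] ex)
qed


lemma expad_hsp: "y \<in> hsp \<Longrightarrow> u \<in> hsp \<Longrightarrow> expad y u \<in> hsp"
  unfolding expad_expL by (rule expL_in_subspace[OF br_linear hsp_subspace br_hsp])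

lemma expad_linear: "linear (expad y)"
  unfolding expad_expL by (rule expL_linear[OF br_linear])

lemma Inn_linear: "\<phi> \<in> Inn \<Longrightarrow> linear \<phi>"
proof (induction rule: Inn.induct)
  case Inn_id then show ?case by (simp add: linear_id id_def module_hom_ident)
next
  case (Inn_step y \<phi>)
  have "linear (expad y \<circ> \<phi>)" by (rule linear_compose[OF Inn_step.IH expad_linear])
  then show ?case by (simp add: o_def)
qed

lemma Inn_hsp: "\<phi> \<in> Inn \<Longrightarrow> u \<in> hsp \<Longrightarrow> \<phi> u \<in> hsp"
  by (induction rule: Inn.induct) (auto intro: expad_hsp)

lemma Inn_comp: "\<phi> \<in> Inn \<Longrightarrow> \<psi> \<in> Inn \<Longrightarrow> (\<lambda>u. \<phi> (\<psi> u)) \<in> Inn"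
proof (induction rule: Inn.induct)
  case Inn_id then show ?case by simp
next
  case (Inn_step y \<phi>)
  then show ?case using Inn.Inn_step[OF Inn_step.hyps(1) Inn_step.IH[OF Inn_step.prems]] by simp
qed

lemma Inn_invariant:
  assumes "\<And>y u. y \<in> hsp \<Longrightarrow> u \<in> S \<Longrightarrow> expad y u \<in> S"
  shows "\<phi> \<in> Inn \<Longrightarrow> u \<in> S \<Longrightarrow> \<phi> u \<in> S"
  by (induction rule: Inn.induct) (auto intro: assms)

definition Wp :: "real \<Rightarrow> ('n::finite) jac set" where
  "Wp s = {u \<in> hsp. \<forall>x. 0 \<le> s * Hval u x}"

definition Pc :: "real \<Rightarrow> ('n::finite) jac set" where
  "Pc s = {u \<in> hsp. \<forall>x. 0 \<le> s * Qf u x}"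

lemma expad_Wp: "y \<in> hsp \<Longrightarrow> u \<in> Wp s \<Longrightarrow> expad y u \<in> Wp s"
  using expad_subst[of y] expad_hsp[of y u] unfolding Wp_def by auto

lemma Qf_via_Hval: "2 * Qf u x = Hval u x + Hval u (- x) - 2 * Hval u 0"
  using Qf_sym[of u 0 x] by simp

lemma expad_Qf:
  assumes "y \<in> hsp"
  shows "\<exists>g. \<forall>u\<in>hsp. \<forall>x. Qf (expad y u) x = Qf u (g x)"
proof -
  obtain g b where lg: "linear g" and h: "\<forall>u\<in>hsp. \<forall>x. Hval (expad y u) x = Hval u (g x + b)"
    using expad_subst[OF assms] by blast
  have "Qf (expad y u) x = Qf u (g x)" if "u \<in> hsp" for u x
  proof -
    have "2 * Qf (expad y u) x = Hval u (g x + b) + Hval u (g (- x) + b) - 2 * Hval u (g 0 + b)"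
      using h that by (simp add: Qf_via_Hval)
    also have "\<dots> = Hval u (b + g x) + Hval u (b - g x) - 2 * Hval u b"
      by (simp add: linear_neg[OF lg] linear_0[OF lg] add.commute)
    also have "\<dots> = 2 * Qf u (g x)" by (rule Qf_sym)
    finally show ?thesis by simp
  qed
  then show ?thesis by blast
qed

lemma expad_Pc: "y \<in> hsp \<Longrightarrow> u \<in> Pc s \<Longrightarrow> expad y u \<in> Pc s"
  using expad_Qf[of y] expad_hsp[of y u] unfolding Pc_def by auto

lemma Inn_Wp: "\<phi> \<in> Inn \<Longrightarrow> u \<in> Wp s \<Longrightarrow> \<phi> u \<in> Wp s"
  by (rule Inn_invariant[OF expad_Wp])

lemma Inn_Pc: "\<phi> \<in> Inn \<Longrightarrow> u \<in> Pc s \<Longrightarrow> \<phi> u \<in> Pc s"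
  by (rule Inn_invariant[OF expad_Pc])


definition e1 :: "('n::finite) jac" where "e1 = (1, 0, 0)"

lemma sp0: "0 \<in> sp" by (rule subspace_0[OF sp_subspace])
lemma e1_hsp: "e1 \<in> hsp" by (simp add: e1_def hsp_def sp0)
lemma Hval_e1: "Hval e1 x = 1" by (simp add: Hval_expand e1_def Qf_def omega_def)
lemma Qf_e1: "Qf e1 x = 0" by (simp add: e1_def Qf_def)

lemma inner_self_zero: "(v::real^'m::finite) \<bullet> v = 0 \<Longrightarrow> v = 0" by simp

lemma Qf_zero_X:
  assumes "u \<in> hsp" "\<forall>x. Qf u x = 0"
  shows "snd (snd u) = 0"
proof -
  obtain z v X where u: "u = (z,v,X)" by (metis prod.exhaust)
  have X: "X \<in> sp" using assms u by (simp add: hsp_def)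
  have q: "x \<bullet> (symJ *v (X *v x)) = 0" for x using assms(2) u by (simp add: Qf_def)
  have c: "x \<bullet> (symJ *v (X *v w)) = 0" for x w
  proof -
    have "(x + w) \<bullet> (symJ *v (X *v (x + w))) = 0" by (rule q)
    then have "x \<bullet> (symJ *v (X *v w)) + w \<bullet> (symJ *v (X *v x)) = 0"
      using q[of x] q[of w]
      by (simp add: matrix_vector_right_distrib inner_add_left inner_add_right)
    then show ?thesis using sp_sym[OF X, of x w] by simp
  qed
  have "X *v w = 0" for w
  proof -
    have "symJ *v (X *v w) = 0" using c[of "symJ *v (X *v w)" w] by simp
    then have "symJ *v (symJ *v (X *v w)) = 0" by simp
    then show ?thesis by (simp add: symJJ)
  qed
  then have "X = 0" using matrix_eq[of X 0] by simp
  then show ?thesis by (simp add: u)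
qed

lemma Hinj:
  assumes "u \<in> hsp" "\<forall>x. Hval u x = 0"
  shows "u = 0"
proof -
  obtain z v X where u: "u = (z,v,X)" by (metis prod.exhaust)
  have Q: "\<forall>x. Qf u x = 0" using assms(2) Qf_via_Hval by (metis mult_eq_0_iff diff_self add_0 zero_neq_numeral)
  then have X: "X = 0" using Qf_zero_X[OF assms(1)] u by simp
  have z: "z = 0" using assms(2)[rule_format, of 0] u by (simp add: Hval_expand omega_def Qf_def)
  have "omega v x = 0" for x using assms(2)[rule_format, of x] u z Q by (simp add: Hval_expand)
  then have "v \<bullet> (symJ *v (- (symJ *v v))) = 0" unfolding omega_def by blast
  then have "v = 0" by (simp add: mv_neg symJJ)
  then show ?thesis using u X z by (simp add: zero_prod_def)
qed

lemma symJ_transpose: "transpose symJ = - symJ"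
  by (auto simp: vec_eq_iff transpose_def symJ_def split: sum.splits)

lemma neg_mv: "(- (A::real^'m::finite^'k::finite)) *v x = - (A *v x)"
  by (simp add: vec_eq_iff matrix_vector_mult_def sum_negf)

lemma symJ_sp: "symJ \<in> sp"
  unfolding sp_vec by (simp del: transpose_matrix_vector add: symJ_transpose symJJ neg_mv)

definition eQ :: "('n::finite) jac" where "eQ = (1, 0, 2 *\<^sub>R symJ)"

lemma eQ_hsp: "eQ \<in> hsp"
  using subspace_scale[OF sp_subspace symJ_sp] by (simp add: eQ_def hsp_def)

lemma Hval_eQ: "Hval eQ x = 1 + x \<bullet> x"
  by (simp add: Hval_expand eQ_def Qf_def omega_def scaleR_mv matrix_vector_mult_scaleR symJJ)


lemma Wp_sub: "Wp s \<subseteq> hsp" by (auto simp: Wp_def)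

lemma Hval_cont: "continuous_on UNIV (\<lambda>u. Hval u x)"
  by (rule linear_continuous_on[OF linear_conv_bounded_linear[THEN iffD1, OF Hval_linear]])

lemma Wp_closed: "closed (Wp s)"
proof -
  have "Wp s = hsp \<inter> (\<Inter>x. {u. 0 \<le> s * Hval u x})" by (auto simp: Wp_def)
  moreover have "closed {u. 0 \<le> s * Hval u x}" for x
    by (rule closed_Collect_le) (auto intro!: continuous_intros Hval_cont)
  then have "closed (\<Inter>x. {u. 0 \<le> s * Hval u x})" by (intro closed_INT) blast
  ultimately show ?thesis using closed_subspace[OF hsp_subspace] closed_Int by metis
qed

lemma Hval_0: "Hval 0 x = 0" using linear_0[OF Hval_linear] .

lemma Wp_cone: "convex_cone (Wp s :: ('n::finite) jac set)"
  unfolding convex_cone_iff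
proof (intro conjI ballI allI impI)
  show "0 \<in> Wp s" using subspace_0[OF hsp_subspace] by (simp add: Wp_def Hval_0)
next
  fix u w :: "'n jac" assume "u \<in> Wp s" "w \<in> Wp s"
  then show "u + w \<in> Wp s"
    by (auto simp: Wp_def Hval_add distrib_left intro: subspace_add[OF hsp_subspace])
next
  fix u :: "'n jac" and c :: real assume "u \<in> Wp s" "0 \<le> c"
  then show "c *\<^sub>R u \<in> Wp s"
    by (auto simp: Wp_def Hval_scaleR mult.left_commute intro: subspace_scale[OF hsp_subspace])
qed

lemma Wp_pointed0: "s \<noteq> 0 \<Longrightarrow> c \<in> Wp s \<Longrightarrow> - c \<in> Wp s \<Longrightarrow> c = 0"
proof -
  assume s: "s \<noteq> 0" and c: "c \<in> Wp s" and m: "- c \<in> Wp s"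
  have "Hval c x = 0" for x
  proof -
    have "0 \<le> s * Hval c x" "0 \<le> s * Hval (- c) x" using c m by (auto simp: Wp_def)
    moreover have "Hval (- c) x = - Hval c x" using Hval_scaleR[of "-1" c x] by simp
    ultimately have "s * Hval c x = 0" by simp
    then show ?thesis using s by simp
  qed
  moreover have "c \<in> hsp" using c by (simp add: Wp_def)
  ultimately show ?thesis using Hinj by blast
qed

lemma Hval_bound:
  fixes u :: "('n::finite) jac"
  assumes "u \<in> hsp"
  shows "\<exists>N\<ge>0. \<forall>x. \<bar>Hval u x\<bar> \<le> N * (1 + x \<bullet> x)"
proof -
  obtain z v X where u: "u = (z,v,X)" by (metis prod.exhaust)
  have "bounded_linear (\<lambda>x::'n vec2. symJ *v (X *v x))"
    by (rule linear_conv_bounded_linear[THEN iffD1]) (simp add: linear_compose[OF matrix_vector_mul_linear matrix_vector_mul_linear, unfolded o_def])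
  then obtain K where K: "\<And>x::'n vec2. norm (symJ *v (X *v x)) \<le> norm x * K" "0 < K"
    using bounded_linear.pos_bounded by blast
  have "bounded_linear (\<lambda>x::'n vec2. symJ *v x)"
    by (rule linear_conv_bounded_linear[THEN iffD1]) simp
  then obtain K2 where K2: "\<And>x::'n vec2. norm (symJ *v x) \<le> norm x * K2" "0 < K2"
    using bounded_linear.pos_bounded by blast
  define N where "N = \<bar>z\<bar> + norm v * K2 + K"
  have "\<bar>Hval u x\<bar> \<le> N * (1 + x \<bullet> x)" for x
  proof -
    have n2: "x \<bullet> x = norm x ^ 2" by (simp add: power2_norm_eq_inner)
    have nx: "norm x \<le> 1 + norm x ^ 2"
    proof -
      have "0 \<le> (norm x - 1) * (norm x - 1)" by simp
      then have "0 \<le> norm x * norm x - 2 * norm x + 1" by (simp add: algebra_simps)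
      moreover have "0 \<le> norm x * norm x" by simp
      ultimately show ?thesis unfolding power2_eq_square by linarith
    qed
    have "\<bar>v \<bullet> (symJ *v x)\<bar> \<le> norm v * norm (symJ *v x)" by (rule Cauchy_Schwarz_ineq2)
    also have "\<dots> \<le> norm v * (norm x * K2)" by (rule mult_left_mono[OF K2(1)]) simp
    finally have h1: "\<bar>v \<bullet> (symJ *v x)\<bar> \<le> norm v * (norm x * K2)" .
    have "\<bar>x \<bullet> (symJ *v (X *v x))\<bar> \<le> norm x * norm (symJ *v (X *v x))" by (rule Cauchy_Schwarz_ineq2)
    also have "\<dots> \<le> norm x * (norm x * K)" by (rule mult_left_mono[OF K(1)]) simp
    finally have h2: "\<bar>x \<bullet> (symJ *v (X *v x))\<bar> \<le> norm x * (norm x * K)" .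
    have "\<bar>Hval u x\<bar> \<le> \<bar>z\<bar> + \<bar>v \<bullet> (symJ *v x)\<bar> + \<bar>x \<bullet> (symJ *v (X *v x))\<bar>"
      by (simp add: u Hval_expand omega_def Qf_def)
    also have "\<dots> \<le> \<bar>z\<bar> + norm v * K2 * norm x + K * norm x ^ 2"
      using h1 h2 by (simp add: power2_eq_square ac_simps)
    also have "\<dots> \<le> \<bar>z\<bar> * (1 + norm x ^ 2) + norm v * K2 * (1 + norm x ^ 2) + K * (1 + norm x ^ 2)"
    proof -
      have "\<bar>z\<bar> \<le> \<bar>z\<bar> * (1 + norm x ^ 2)" by (simp add: mult_le_cancel_left1)
      moreover have "norm v * K2 * norm x \<le> norm v * K2 * (1 + norm x ^ 2)"
        by (rule mult_left_mono[OF nx]) (use K2 in simp)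
      moreover have "K * norm x ^ 2 \<le> K * (1 + norm x ^ 2)" using K by simp
      ultimately show ?thesis by linarith
    qed
    also have "\<dots> = N * (1 + x \<bullet> x)" by (simp add: N_def n2 algebra_simps)
    finally show ?thesis .
  qed
  moreover have "N \<ge> 0" using K K2 by (simp add: N_def)
  ultimately show ?thesis by blast
qed

lemma Wp_span:
  assumes s: "s = 1 \<or> s = -1"
  shows "span (Wp s) = hsp"
proof
  show "span (Wp s) \<subseteq> hsp" by (rule span_minimal[OF Wp_sub hsp_subspace])
next
  have ss: "s * s = 1" using s by auto
  have sq: "s *\<^sub>R eQ \<in> Wp s"
    using subspace_scale[OF hsp_subspace eQ_hsp] by (simp add: Wp_def Hval_scaleR Hval_eQ mult.assoc[symmetric] ss)
  show "hsp \<subseteq> span (Wp s)"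
  proof
    fix u assume u: "u \<in> hsp"
    obtain N where N: "N \<ge> 0" "\<And>x. \<bar>Hval u x\<bar> \<le> N * (1 + x \<bullet> x)" using Hval_bound[OF u] by blast
    define w where "w = u + N *\<^sub>R (s *\<^sub>R eQ)"
    have "w \<in> Wp s"
    proof -
      have "w \<in> hsp" unfolding w_def
        by (intro subspace_add[OF hsp_subspace] u subspace_scale[OF hsp_subspace] eQ_hsp)
      moreover have "0 \<le> s * Hval w x" for x
      proof -
        have "s * Hval w x = s * Hval u x + N * (1 + x \<bullet> x)"
          by (simp add: w_def Hval_add Hval_scaleR Hval_eQ distrib_left mult.left_commute mult.assoc[symmetric] ss)
        moreover have "\<bar>s * Hval u x\<bar> \<le> N * (1 + x \<bullet> x)" using N(2)[of x] s by auto
        ultimately show ?thesis by linarith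
      qed
      ultimately show ?thesis by (simp add: Wp_def)
    qed
    then have "w - N *\<^sub>R (s *\<^sub>R eQ) \<in> span (Wp s)"
      by (intro span_diff span_base span_scale sq)
    then show "u \<in> span (Wp s)" by (simp add: w_def)
  qed
qed


lemma rec_lemma:
  fixes K :: "'a::real_normed_vector set"
  assumes cl: "closed K" and cc: "convex_cone K" and h: "\<And>t. t \<ge> 0 \<Longrightarrow> a + t *\<^sub>R d \<in> K"
  shows "d \<in> K"
proof (rule Lim_in_closed_set[OF cl])
  show "eventually (\<lambda>t. inverse t *\<^sub>R a + d \<in> K) at_top"
    using eventually_gt_at_top[of "0::real"]
  proof (rule eventually_mono)
    fix t :: real assume t: "0 < t"
    have "inverse t *\<^sub>R (a + t *\<^sub>R d) \<in> K"
      using convex_cone_scaleR[OF cc _ h] t by simp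
    then show "inverse t *\<^sub>R a + d \<in> K" using t by (simp add: scaleR_add_right)
  qed
  show "(at_top :: real filter) \<noteq> bot" by simp
  have "((\<lambda>t. inverse t *\<^sub>R a) \<longlongrightarrow> 0 *\<^sub>R a) (at_top :: real filter)"
    by (intro tendsto_scaleR tendsto_inverse_0_at_top filterlim_ident tendsto_const)
  then show "((\<lambda>t. inverse t *\<^sub>R a + d) \<longlongrightarrow> d) (at_top :: real filter)"
    using tendsto_add[OF _ tendsto_const[of d]] by fastforce
qed

lemma pointed_of:
  fixes K :: "'a::real_normed_vector set"
  assumes cl: "closed K" and cc: "convex_cone K" and h: "\<And>c. c \<in> K \<Longrightarrow> - c \<in> K \<Longrightarrow> c = 0"
  shows "pointed K"
  unfolding pointed_def
proof
  assume "\<exists>a d. d \<noteq> 0 \<and> (\<forall>t. a + t *\<^sub>R d \<in> K)"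
  then obtain a d where d: "d \<noteq> 0" and l: "\<And>t. a + t *\<^sub>R d \<in> K" by blast
  have "d \<in> K" by (rule rec_lemma[OF cl cc l])
  moreover have "- d \<in> K"
    by (rule rec_lemma[OF cl cc, of a]) (use l[of "- _"] in simp)
  ultimately show False using h d by blast
qed

lemma pointed_imp:
  fixes K :: "'a::real_normed_vector set"
  assumes cc: "convex_cone K" and p: "pointed K" and c: "c \<in> K" "- c \<in> K"
  shows "c = 0"
proof (rule ccontr)
  assume "c \<noteq> 0"
  moreover have "0 + t *\<^sub>R c \<in> K" for t
  proof (cases "t \<ge> 0")
    case True then show ?thesis using convex_cone_scaleR[OF cc True c(1)] by simp
  next
    case False
    then have "(- t) *\<^sub>R (- c) \<in> K" using convex_cone_scaleR[OF cc _ c(2), of "- t"] by simp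
    then show ?thesis by simp
  qed
  ultimately show False using p unfolding pointed_def by blast
qed


lemma sum_bound:
  fixes C D :: "'a::euclidean_space set"
  assumes clC: "closed C" and clD: "closed D" and ccC: "convex_cone C" and ccD: "convex_cone D"
    and disj: "\<And>c. c \<in> C \<Longrightarrow> - c \<in> D \<Longrightarrow> c = 0"
  shows "\<exists>e>0. \<forall>c\<in>C. \<forall>d\<in>D. e * norm c \<le> norm (c + d)"
proof (cases "C \<inter> sphere 0 1 = {}")
  case True
  have "c = 0" if "c \<in> C" for c
  proof (rule ccontr)
    assume "c \<noteq> 0"
    then have "inverse (norm c) *\<^sub>R c \<in> C \<inter> sphere 0 1"
      using convex_cone_scaleR[OF ccC _ that, of "inverse (norm c)"] by simp
    then show False using True by blast
  qed
  then show ?thesis by (intro exI[of _ 1]) force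
next
  case False
  have cpt: "compact (C \<inter> sphere 0 1)" by (simp add: clC compact_Int_closed closed_Int_compact)
  have "continuous_on (C \<inter> sphere 0 1) (\<lambda>c. infdist (- c) D)"
    by (intro continuous_intros)
  then obtain c0 where c0: "c0 \<in> C \<inter> sphere 0 1" and mn: "\<And>c. c \<in> C \<inter> sphere 0 1 \<Longrightarrow> infdist (- c0) D \<le> infdist (- c) D"
    using continuous_attains_inf[OF cpt False] by blast
  have D0: "D \<noteq> {}" using convex_cone_nonempty[OF ccD] .
  have "- c0 \<notin> D"
  proof
    assume "- c0 \<in> D"
    then have "c0 = 0" using disj c0 by blast
    then show False using c0 by simp
  qed
  then have epos: "infdist (- c0) D > 0" using infdist_pos_not_in_closed[OF clD D0] by blast
  show ?thesis
  proof (intro exI[of _ "infdist (- c0) D"] conjI ballI epos)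
    fix c d assume c: "c \<in> C" and d: "d \<in> D"
    show "infdist (- c0) D * norm c \<le> norm (c + d)"
    proof (cases "c = 0")
      case True then show ?thesis by simp
    next
      case False
      define n where "n = norm c"
      have n: "n > 0" using False by (simp add: n_def)
      have cs: "inverse n *\<^sub>R c \<in> C \<inter> sphere 0 1"
        using convex_cone_scaleR[OF ccC _ c, of "inverse n"] n by (simp add: n_def)
      have ds: "inverse n *\<^sub>R d \<in> D" using convex_cone_scaleR[OF ccD _ d, of "inverse n"] n by simp
      have "infdist (- c0) D \<le> infdist (- (inverse n *\<^sub>R c)) D" using mn[OF cs] .
      also have "\<dots> \<le> dist (- (inverse n *\<^sub>R c)) (inverse n *\<^sub>R d)" by (rule infdist_le[OF ds])
      also have "\<dots> = inverse n * norm (c + d)"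
        using n by (simp add: dist_norm norm_minus_commute[of "- _"] scaleR_add_right[symmetric] add.commute)
      finally have "infdist (- c0) D \<le> inverse n * norm (c + d)" .
      then have "infdist (- c0) D * n \<le> norm (c + d)" using n by (simp add: field_simps)
      then show ?thesis by (simp add: n_def)
    qed
  qed
qed

definition msum :: "'a::real_vector set \<Rightarrow> 'a set \<Rightarrow> 'a set" where
  "msum C D = {c + d | c d. c \<in> C \<and> d \<in> D}"

lemma msum_cone:
  assumes "convex_cone C" "convex_cone D"
  shows "convex_cone (msum C D)"
  unfolding convex_cone_iff msum_def
proof (intro conjI ballI allI impI)
  show "0 \<in> {c + d |c d. c \<in> C \<and> d \<in> D}"
    using assms by (force simp: convex_cone_iff)
next
  fix x y assume "x \<in> {c + d |c d. c \<in> C \<and> d \<in> D}" "y \<in> {c + d |c d. c \<in> C \<and> d \<in> D}"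
  then obtain c d c' d' where "x = c + d" "y = c' + d'" "c \<in> C" "d \<in> D" "c' \<in> C" "d' \<in> D" by blast
  moreover have "x + y = (c + c') + (d + d')" using calculation by (simp add: algebra_simps)
  ultimately show "x + y \<in> {c + d |c d. c \<in> C \<and> d \<in> D}"
    using assms convex_cone_add by blast
next
  fix x and t :: real assume "x \<in> {c + d |c d. c \<in> C \<and> d \<in> D}" "0 \<le> t"
  then obtain c d where "x = c + d" "c \<in> C" "d \<in> D" by blast
  moreover have "t *\<^sub>R x = t *\<^sub>R c + t *\<^sub>R d" using calculation by (simp add: scaleR_add_right)
  ultimately show "t *\<^sub>R x \<in> {c + d |c d. c \<in> C \<and> d \<in> D}"
    using assms convex_cone_scaleR \<open>0 \<le> t\<close> by blast
qed

lemma msum_closed: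
  fixes C D :: "'a::euclidean_space set"
  assumes clC: "closed C" and clD: "closed D" and ccC: "convex_cone C" and ccD: "convex_cone D"
    and disj: "\<And>c. c \<in> C \<Longrightarrow> - c \<in> D \<Longrightarrow> c = 0"
  shows "closed (msum C D)"
proof -
  obtain e where e: "e > 0" "\<And>c d. c \<in> C \<Longrightarrow> d \<in> D \<Longrightarrow> e * norm c \<le> norm (c + d)"
    using sum_bound[OF assms] by blast
  have "closure (msum C D) \<subseteq> msum C D"
  proof
    fix l assume l: "l \<in> closure (msum C D)"
    define R where "R = (norm l + 1) / e"
    define T where "T = (\<Union>x\<in>D. \<Union>y\<in>C \<inter> cball 0 R. {x + y})"
    have clT: "closed T" unfolding T_def
      by (rule closed_compact_sums[OF clD]) (simp add: clC compact_Int_closed closed_Int_compact)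
    have TS: "T \<subseteq> msum C D"
    proof
      fix z assume "z \<in> T"
      then obtain x y where xy: "x \<in> D" "y \<in> C" "z = y + x" unfolding T_def by (auto simp: add.commute)
      then show "z \<in> msum C D" unfolding msum_def by blast
    qed
    have "l \<in> closure T"
      unfolding closure_approachable
    proof (intro allI impI)
      fix r :: real assume r: "r > 0"
      obtain y where y: "y \<in> msum C D" "dist y l < min r 1"
        using l r unfolding closure_approachable by (metis min_less_iff_conj zero_less_one)
      obtain c d where cd: "y = c + d" "c \<in> C" "d \<in> D" using y(1) unfolding msum_def by blast
      have "norm y \<le> norm l + 1"
        using y(2) norm_triangle_ineq2[of y l] by (simp add: dist_norm)
      then have "e * norm c \<le> norm l + 1" using e(2)[OF cd(2,3)] cd(1) by simp
      then have "norm c \<le> R" using e(1) by (simp add: R_def field_simps)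
      then have "c \<in> C \<inter> cball 0 R" using cd by simp
      moreover have "y = d + c" using cd(1) by (simp add: add.commute)
      ultimately have "y \<in> T" unfolding T_def using cd(3) by blast
      then show "\<exists>y\<in>T. dist y l < r" using y(2) by auto
    qed
    then show "l \<in> msum C D" using clT TS closure_closed by auto
  qed
  then show ?thesis using closure_subset_eq by blast
qed

lemma msum_pointed:
  fixes C D :: "'a::euclidean_space set"
  assumes clC: "closed C" and clD: "closed D" and ccC: "convex_cone C" and ccD: "convex_cone D"
    and pC: "\<And>c. c \<in> C \<Longrightarrow> - c \<in> C \<Longrightarrow> c = 0"
    and pD: "\<And>c. c \<in> D \<Longrightarrow> - c \<in> D \<Longrightarrow> c = 0"
    and disj: "\<And>c. c \<in> C \<Longrightarrow> - c \<in> D \<Longrightarrow> c = 0"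
  shows "pointed (msum C D)"
proof (rule pointed_of[OF msum_closed[OF clC clD ccC ccD disj] msum_cone[OF ccC ccD]])
  fix s assume s: "s \<in> msum C D" "- s \<in> msum C D"
  obtain c1 d1 where 1: "s = c1 + d1" "c1 \<in> C" "d1 \<in> D" using s(1) unfolding msum_def by blast
  obtain c2 d2 where 2: "- s = c2 + d2" "c2 \<in> C" "d2 \<in> D" using s(2) unfolding msum_def by blast
  have "(c1 + d1) + (c2 + d2) = 0" using 1(1) 2(1) by (metis add.right_inverse)
  then have e: "c1 + c2 = - (d1 + d2)" by (simp add: algebra_simps eq_neg_iff_add_eq_0)
  have "c1 + c2 \<in> C" using convex_cone_add[OF ccC 1(2) 2(2)] .
  moreover have "- (c1 + c2) \<in> D" using convex_cone_add[OF ccD 1(3) 2(3)] e by (simp only: minus_minus)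
  ultimately have c0: "c1 + c2 = 0" using disj by blast
  then have "c1 = 0" using pC[OF 1(2)] 2(2) by (simp add: eq_neg_iff_add_eq_0[symmetric] minus_unique)
  moreover have "d1 + d2 = 0" using e c0 by (metis neg_equal_0_iff_equal)
  then have "d1 = 0" using pD[OF 1(3)] 2(3) by (simp add: minus_unique)
  ultimately show "s = 0" using 1 by simp
qed


lemma closed_cone_closure: "convex_cone (S::'a::euclidean_space set) \<Longrightarrow> convex_cone (closure S)"
  unfolding convex_cone_def
  using conic_closure convex_closure closure_subset by blast

lemma Cx_closed: "closed (Cx x)" by (simp add: Cx_def)

lemma Cx_cone: "convex_cone (Cx x)"
  unfolding Cx_def by (rule closed_cone_closure[OF convex_cone_convex_cone_hull])

lemma Cx_orbit: "\<phi> \<in> Inn \<Longrightarrow> \<phi> x \<in> Cx x"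
proof -
  assume "\<phi> \<in> Inn"
  then have "\<phi> x \<in> (\<lambda>\<phi>. \<phi> x) ` Inn" by (rule rev_image_eqI) simp
  then have "\<phi> x \<in> convex_cone hull ((\<lambda>\<phi>. \<phi> x) ` Inn)" by (rule hull_inc)
  then show ?thesis unfolding Cx_def by (rule closure_subset[THEN subsetD])
qed

lemma Cx_x: "x \<in> Cx x" using Cx_orbit[OF Inn_id, of x] by (simp only: id_apply)

lemma Cx_least:
  assumes "closed K" "convex_cone K" "\<And>\<phi>. \<phi> \<in> Inn \<Longrightarrow> \<phi> x \<in> K"
  shows "Cx x \<subseteq> K"
proof -
  have "(\<lambda>\<phi>. \<phi> x) ` Inn \<subseteq> K" using assms(3) by (rule image_subsetI)
  then have "convex_cone hull ((\<lambda>\<phi>. \<phi> x) ` Inn) \<subseteq> K" using assms(2) by (rule hull_minimal)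
  then show ?thesis unfolding Cx_def by (rule closure_minimal[OF _ assms(1)])
qed

lemma hsp_cone: "convex_cone hsp"
  unfolding convex_cone_iff
  using subspace_0[OF hsp_subspace] subspace_add[OF hsp_subspace] subspace_scale[OF hsp_subspace] by blast

lemma Cx_sub: "x \<in> hsp \<Longrightarrow> Cx x \<subseteq> hsp"
  by (rule Cx_least[OF closed_subspace[OF hsp_subspace] hsp_cone], erule Inn_hsp, assumption)

lemma Inn_cont: "\<phi> \<in> Inn \<Longrightarrow> continuous_on UNIV \<phi>"
  by (rule linear_continuous_on[OF linear_conv_bounded_linear[THEN iffD1, OF Inn_linear]])

lemma Cx_inv:
  assumes ph: "\<phi> \<in> Inn" shows "\<phi> ` Cx x \<subseteq> Cx x"
proof -
  have l: "linear \<phi>" using Inn_linear[OF ph] .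
  define P where "P = {u. \<phi> u \<in> Cx x}"
  have "\<forall>B. closed B \<longrightarrow> closed (\<phi> -` B \<inter> UNIV)"
    using continuous_on_closed_vimage[OF closed_UNIV, of \<phi>] Inn_cont[OF ph] by blast
  then have "closed (\<phi> -` Cx x)" using Cx_closed[of x] by (metis Int_UNIV_right)
  then have "closed P" by (simp add: P_def vimage_def)
  moreover have "convex_cone P"
    unfolding convex_cone_iff P_def
  proof (intro conjI ballI allI impI)
    show "0 \<in> {u. \<phi> u \<in> Cx x}" using linear_0[OF l] convex_cone_contains_0[OF Cx_cone] by simp
  next
    fix u w assume "u \<in> {u. \<phi> u \<in> Cx x}" "w \<in> {u. \<phi> u \<in> Cx x}"
    then show "u + w \<in> {u. \<phi> u \<in> Cx x}" using linear_add[OF l] convex_cone_add[OF Cx_cone] by simp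
  next
    fix u and c :: real assume "u \<in> {u. \<phi> u \<in> Cx x}" "0 \<le> c"
    then show "c *\<^sub>R u \<in> {u. \<phi> u \<in> Cx x}" using linear_scale[OF l] convex_cone_scaleR[OF Cx_cone] by simp
  qed
  moreover have "\<psi> x \<in> P" if "\<psi> \<in> Inn" for \<psi>
    unfolding P_def using Cx_orbit[OF Inn_comp[OF ph that]] by simp
  ultimately have "Cx x \<subseteq> P" by (rule Cx_least)
  then show ?thesis unfolding P_def by blast
qed


lemma ytr_hsp: "(0, a, 0) \<in> hsp" by (simp add: hsp_def sp0)

lemma br_tr: "br (0, a, 0) (z, v, X) = (omega a v, - (X *v a), 0)"
  by (simp add: br_simp)

lemma expad_nil3:
  assumes "(br y ^^ 3) u = 0"
  shows "expad y u = u + br y u + (1/2) *\<^sub>R br y (br y u)"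
proof -
  have z: "(br y ^^ k) u = 0" if "k \<notin> {0,1,2}" for k
  proof -
    have k: "k = (k - 3) + 3" using that by auto
    have "(br y ^^ k) u = (br y ^^ (k - 3)) ((br y ^^ 3) u)"
      by (subst k) (simp only: funpow_add o_apply)
    also have "\<dots> = 0" using assms linear_0[OF linear_funpow[OF br_linear]] by simp
    finally show ?thesis .
  qed
  have "expad y u = (\<Sum>k\<in>{0,1,2}. (inverse (fact k) :: real) *\<^sub>R (br y ^^ k) u)"
    unfolding expad_def by (rule suminf_finite) (use z in auto)
  also have "\<dots> = u + br y u + (1/2) *\<^sub>R br y (br y u)"
    by (simp add: numeral_2_eq_2)
  finally show ?thesis .
qed

lemma expad_tr:
  "expad (0, a, 0) (z, v, X) = (z + omega a v + (1/2) * omega a (- (X *v a)), v - X *v a, X)"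
proof -
  have b1: "br (0, a, 0) (z, v, X) = (omega a v, - (X *v a), 0)" by (rule br_tr)
  have b2: "br (0, a, 0) (br (0, a, 0) (z, v, X)) = (omega a (- (X *v a)), 0, 0)"
    unfolding b1 br_tr by simp
  have b3: "(br (0, a, 0) ^^ 3) (z, v, X) = 0"
    by (simp add: numeral_3_eq_3 b2 br_tr omega_def zero_prod_def)
  show ?thesis
    unfolding expad_nil3[OF b3] b2 b1 by (simp add: br_tr)
qed

lemma Inn_tr: "(\<lambda>u. expad (0, a, 0) u) \<in> Inn"
  using Inn_step[OF ytr_hsp Inn_id] by simp

lemma Cx_tr: "expad (0, a, 0) x \<in> Cx x"
  using Cx_orbit[OF Inn_tr] .

lemma Cx_Q:
  assumes "x \<in> hsp"
  shows "x + Qf x a *\<^sub>R e1 \<in> Cx x"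
proof -
  obtain z v X where x: "x = (z, v, X)" by (metis prod.exhaust)
  have "expad (0, a, 0) x + expad (0, - a, 0) x = 2 *\<^sub>R (x + Qf x a *\<^sub>R e1)"
    by (simp add: x expad_tr e1_def Qf_def omega_def mv_neg scaleR_2 inner_minus_right)
  moreover have "expad (0, a, 0) x + expad (0, - a, 0) x \<in> Cx x"
    by (rule convex_cone_add[OF Cx_cone Cx_tr Cx_tr])
  ultimately have "2 *\<^sub>R (x + Qf x a *\<^sub>R e1) \<in> Cx x" by simp
  then have "(1/2) *\<^sub>R (2 *\<^sub>R (x + Qf x a *\<^sub>R e1)) \<in> Cx x"
    by (rule convex_cone_scaleR[OF Cx_cone, rotated]) simp
  then show ?thesis by simp
qed


lemma Cx_sgn:
  assumes x: "x \<in> hsp" and q: "Qf x b \<noteq> 0"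
  shows "sgn (Qf x b) *\<^sub>R e1 \<in> Cx x"
proof -
  define q where "q = Qf x b"
  have "x + t *\<^sub>R (q *\<^sub>R e1) \<in> Cx x" if "t \<ge> 0" for t
  proof -
    have "Qf x (sqrt t *\<^sub>R b) = t * q" using that by (simp add: Qf_scale q_def)
    then show ?thesis using Cx_Q[OF x, of "sqrt t *\<^sub>R b"] by simp
  qed
  then have "q *\<^sub>R e1 \<in> Cx x" by (rule rec_lemma[OF Cx_closed Cx_cone])
  then have "inverse \<bar>q\<bar> *\<^sub>R (q *\<^sub>R e1) \<in> Cx x" by (rule convex_cone_scaleR[OF Cx_cone, rotated]) simp
  moreover have "inverse \<bar>q\<bar> *\<^sub>R (q *\<^sub>R e1) = sgn q *\<^sub>R e1"
    using q by (simp add: q_def sgn_if)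
  ultimately have "sgn q *\<^sub>R e1 \<in> Cx x" by metis
  then show ?thesis by (simp add: q_def)
qed

lemma Cx_X0:
  assumes v: "v \<noteq> 0"
  shows "\<exists>c. c \<noteq> 0 \<and> c *\<^sub>R e1 \<in> Cx (z, v, 0) \<and> - (c *\<^sub>R e1) \<in> Cx (z, v, 0)"
proof -
  define x where "x = (z, v, 0::'a::finite mat2)"
  define w where "w = symJ *v v"
  define c where "c = w \<bullet> w"
  have w0: "w \<noteq> 0"
  proof
    assume "w = 0"
    then have "symJ *v w = 0" by simp
    then show False using v by (simp add: w_def symJJ)
  qed
  then have c0: "c \<noteq> 0" by (simp add: c_def)
  have l: "x + t *\<^sub>R (c *\<^sub>R e1) \<in> Cx x" for t
  proof -
    have "expad (0, t *\<^sub>R w, 0) x = x + t *\<^sub>R (c *\<^sub>R e1)"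
      by (simp add: x_def expad_tr e1_def omega_def c_def w_def)
    then show ?thesis using Cx_tr[of "t *\<^sub>R w" x] by simp
  qed
  have "c *\<^sub>R e1 \<in> Cx x" by (rule rec_lemma[OF Cx_closed Cx_cone l])
  moreover have "- (c *\<^sub>R e1) \<in> Cx x"
    by (rule rec_lemma[OF Cx_closed Cx_cone, of x]) (use l[of "- _"] in simp)
  ultimately show ?thesis using c0 unfolding x_def by blast
qed

lemma Qf_cont: "continuous_on UNIV (\<lambda>u. Qf u x)"
proof -
  have "linear (\<lambda>u. Qf u x)" by (rule linearI) (simp_all add: Qf_add Qf_scaleR)
  then show ?thesis by (rule linear_continuous_on[OF linear_conv_bounded_linear[THEN iffD1]])
qed

lemma Pc_closed: "closed (Pc s)"
proof -
  have "Pc s = hsp \<inter> (\<Inter>x. {u. 0 \<le> s * Qf u x})" by (auto simp: Pc_def)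
  moreover have "closed {u. 0 \<le> s * Qf u x}" for x
    by (rule closed_Collect_le) (auto intro!: continuous_intros Qf_cont)
  then have "closed (\<Inter>x. {u. 0 \<le> s * Qf u x})" by (intro closed_INT) blast
  ultimately show ?thesis using closed_subspace[OF hsp_subspace] closed_Int by metis
qed

lemma Qf_0: "Qf 0 x = 0" using Qf_scaleR[of 0 0 x] by simp

lemma Pc_cone: "convex_cone (Pc s :: ('n::finite) jac set)"
  unfolding convex_cone_iff
proof (intro conjI ballI allI impI)
  show "0 \<in> Pc s" using subspace_0[OF hsp_subspace] by (simp add: Pc_def Qf_0)
next
  fix u w :: "'n jac" assume "u \<in> Pc s" "w \<in> Pc s"
  then show "u + w \<in> Pc s"
    by (auto simp: Pc_def Qf_add distrib_left intro: subspace_add[OF hsp_subspace])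
next
  fix u :: "'n jac" and c :: real assume "u \<in> Pc s" "0 \<le> c"
  then show "c *\<^sub>R u \<in> Pc s"
    by (auto simp: Pc_def Qf_scaleR mult.left_commute intro: subspace_scale[OF hsp_subspace])
qed

lemma Cx_Pc: "x \<in> Pc s \<Longrightarrow> Cx x \<subseteq> Pc s"
  by (rule Cx_least[OF Pc_closed Pc_cone], erule Inn_Pc, assumption)


lemma e1_ne0: "e1 \<noteq> 0" by (simp add: e1_def zero_prod_def)

lemma disj_lemma:
  fixes K :: "('n::finite) jac set"
  assumes s: "s = 1 \<or> s = -1" and KP: "K \<subseteq> Pc s" and se: "s *\<^sub>R e1 \<in> K"
    and cc: "convex_cone K" and p: "pointed K" and w: "w \<in> K" and mw: "- w \<in> Wp s"
  shows "w = 0"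
proof -
  have s0: "s \<noteq> 0" and ss: "s * s = 1" and as: "\<bar>s\<bar> = 1" using s by auto
  have wP: "w \<in> Pc s" using KP w by blast
  then have wh: "w \<in> hsp" by (simp add: Pc_def)
  have sQ: "0 \<le> s * Qf w y" for y using wP by (simp add: Pc_def)
  have sH: "s * Hval w y \<le> 0" for y
  proof -
    have "0 \<le> s * Hval (- w) y" using mw by (simp add: Wp_def)
    moreover have "Hval (- w) y = - Hval w y" using Hval_scaleR[of "-1" w y] by simp
    ultimately show ?thesis by simp
  qed
  define z where "z = fst w"
  define om where "om y = omega (fst (snd w)) y" for y
  have HS: "Hval w (t *\<^sub>R y) = z + t * om y + t^2 * Qf w y" for t y
    by (simp add: Hval_scale z_def om_def)
  have Q0: "Qf w y = 0" for y
  proof (rule ccontr)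
    assume "Qf w y \<noteq> 0"
    then have pos: "s * Qf w y > 0" using sQ[of y] s0 by (simp add: less_le)
    define t where "t = sqrt ((\<bar>s * z\<bar> + 1) / (s * Qf w y))"
    have "t^2 = (\<bar>s * z\<bar> + 1) / (s * Qf w y)" unfolding t_def
      by (rule real_sqrt_pow2) (use pos in simp)
    moreover have "s \<noteq> 0" "Qf w y \<noteq> 0" using pos by auto
    ultimately have t2: "t^2 * (s * Qf w y) = \<bar>s * z\<bar> + 1" by simp
    have a1: "s * (z + t * om y + t^2 * Qf w y) \<le> 0" using sH[of "t *\<^sub>R y"] by (simp only: HS)
    have a2: "s * (z + (- t) * om y + (- t)^2 * Qf w y) \<le> 0" using sH[of "(- t) *\<^sub>R y"] by (simp only: HS)
    have "s * (z + t * om y + t^2 * Qf w y) + s * (z + (- t) * om y + (- t)^2 * Qf w y)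
        = 2 * (s * z + t^2 * (s * Qf w y))" by (simp add: algebra_simps power2_eq_square)
    then have "2 * (s * z + t^2 * (s * Qf w y)) \<le> 0" using add_nonpos_nonpos[OF a1 a2] by simp
    then have "s * z + t^2 * (s * Qf w y) \<le> 0" by simp
    then show False using t2 by simp
  qed
  have om0: "om y = 0" for y
  proof (rule ccontr)
    assume "om y \<noteq> 0"
    then have nz: "s * om y \<noteq> 0" using s0 by simp
    define t where "t = (\<bar>s * z\<bar> + 1) / (s * om y)"
    have "s * Hval w (t *\<^sub>R y) \<le> 0" by (rule sH)
    then have "s * z + t * (s * om y) \<le> 0" by (simp add: HS Q0 algebra_simps)
    moreover have "t * (s * om y) = \<bar>s * z\<bar> + 1" using nz by (simp add: t_def)
    ultimately show False by simp
  qed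
  have Hc: "Hval w y = z" for y using HS[of 1 y] om0 Q0 by simp
  have wz: "w = z *\<^sub>R e1"
  proof -
    have "w + (- z) *\<^sub>R e1 \<in> hsp"
      by (intro subspace_add[OF hsp_subspace] wh subspace_scale[OF hsp_subspace] e1_hsp)
    moreover have "\<forall>y. Hval (w + (- z) *\<^sub>R e1) y = 0" by (simp only: Hval_add Hval_scaleR Hc Hval_e1) simp
    ultimately have "w + (- z) *\<^sub>R e1 = 0" by (rule Hinj)
    then show ?thesis by (simp add: algebra_simps)
  qed
  have sz: "s * z \<le> 0" using sH[of 0] Hc by simp
  show ?thesis
  proof (cases "z = 0")
    case True then show ?thesis using wz by simp
  next
    case False
    have "inverse \<bar>z\<bar> *\<^sub>R w \<in> K" by (rule convex_cone_scaleR[OF cc _ w]) simp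
    moreover have "inverse \<bar>z\<bar> *\<^sub>R w = - (s *\<^sub>R (e1::'n jac))"
      using s sz False by (auto simp: wz)
    ultimately have "- (s *\<^sub>R (e1::'n jac)) \<in> K" by simp
    then have "s *\<^sub>R (e1::'n jac) = 0" using pointed_imp[OF cc p se] by blast
    then show ?thesis using s0 by (simp add: e1_def zero_prod_def)
  qed
qed


lemma Wp_good:
  fixes x :: "('n::finite) jac"
  assumes s: "s = 1 \<or> s = -1" and x: "x \<in> Wp s"
  shows "\<exists>W. W \<subseteq> hsp \<and> x \<in> W \<and> closed W \<and> convex_cone W \<and> pointed W
            \<and> span W = hsp \<and> (\<forall>\<phi>\<in>(Inn :: ('n jac \<Rightarrow> 'n jac) set). \<phi> ` W \<subseteq> W)"
proof (intro exI[of _ "Wp s"] conjI ballI)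
  show "pointed (Wp s :: 'n jac set)"
    by (rule pointed_of[OF Wp_closed Wp_cone]) (rule Wp_pointed0, use s in auto)
  show "span (Wp s :: 'n jac set) = hsp" by (rule Wp_span[OF s])
  fix \<phi> :: "'n jac \<Rightarrow> 'n jac" assume "\<phi> \<in> Inn"
  then show "\<phi> ` Wp s \<subseteq> Wp s" using Inn_Wp by blast
qed (simp_all add: Wp_sub x Wp_closed Wp_cone)

lemma sum_good:
  fixes x :: "('n::finite) jac"
  assumes s: "s = 1 \<or> s = -1" and xh: "x \<in> hsp" and xP: "x \<in> Pc s" and se: "s *\<^sub>R e1 \<in> Cx x"
    and p: "pointed (Cx x)"
  shows "\<exists>W. W \<subseteq> hsp \<and> x \<in> W \<and> closed W \<and> convex_cone W \<and> pointed W
            \<and> span W = hsp \<and> (\<forall>\<phi>\<in>(Inn :: ('n jac \<Rightarrow> 'n jac) set). \<phi> ` W \<subseteq> W)"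
proof -
  have s0: "s \<noteq> 0" using s by auto
  have KP: "Cx x \<subseteq> Pc s" by (rule Cx_Pc[OF xP])
  have disj: "c = 0" if "c \<in> Cx x" "- c \<in> Wp s" for c
    by (rule disj_lemma[OF s KP se Cx_cone p that])
  have pC: "c = 0" if "c \<in> Cx x" "- c \<in> Cx x" for c
    by (rule pointed_imp[OF Cx_cone p that])
  have pD: "c = 0" if "c \<in> Wp s" "- c \<in> Wp s" for c :: "'n jac"
    by (rule Wp_pointed0[OF s0 that])
  define W where "W = msum (Cx x) (Wp s)"
  have Wsub: "W \<subseteq> hsp"
  proof
    fix u assume "u \<in> W"
    then obtain c d where "u = c + d" "c \<in> Cx x" "d \<in> Wp s" unfolding W_def msum_def by blast
    moreover have "c \<in> hsp" using Cx_sub[OF xh] \<open>c \<in> Cx x\<close> by blast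
    moreover have "d \<in> hsp" using Wp_sub \<open>d \<in> Wp s\<close> by blast
    ultimately show "u \<in> hsp" using subspace_add[OF hsp_subspace] by simp
  qed
  have WpW: "(Wp s :: 'n jac set) \<subseteq> W"
  proof
    fix d :: "'n jac" assume "d \<in> Wp s"
    moreover have "(0::'n jac) \<in> Cx x" by (rule convex_cone_contains_0[OF Cx_cone])
    moreover have "d = 0 + d" by simp
    ultimately show "d \<in> W" unfolding W_def msum_def by blast
  qed
  have xW: "x \<in> W"
  proof -
    have "(0::'n jac) \<in> Wp s" by (rule convex_cone_contains_0[OF Wp_cone])
    moreover have "x = x + 0" by simp
    ultimately show ?thesis unfolding W_def msum_def using Cx_x[of x] by blast
  qed
  show ?thesis
  proof (intro exI[of _ W] conjI ballI)
    show "W \<subseteq> hsp" by (rule Wsub)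
    show "x \<in> W" by (rule xW)
    show "closed W" unfolding W_def by (rule msum_closed[OF Cx_closed Wp_closed Cx_cone Wp_cone disj])
    show "convex_cone W" unfolding W_def by (rule msum_cone[OF Cx_cone Wp_cone])
    show "pointed W" unfolding W_def by (rule msum_pointed[OF Cx_closed Wp_closed Cx_cone Wp_cone pC pD disj])
    show "span W = hsp"
    proof
      show "span W \<subseteq> hsp" by (rule span_minimal[OF Wsub hsp_subspace])
      have "span (Wp s :: 'n jac set) = hsp" by (rule Wp_span[OF s])
      then show "hsp \<subseteq> span W" using span_mono[OF WpW] by simp
    qed
    fix \<phi> :: "'n jac \<Rightarrow> 'n jac" assume ph: "\<phi> \<in> Inn"
    show "\<phi> ` W \<subseteq> W"
    proof
      fix u assume "u \<in> \<phi> ` W"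
      then obtain w where "u = \<phi> w" "w \<in> W" by blast
      then obtain c d where cd: "u = \<phi> (c + d)" "c \<in> Cx x" "d \<in> Wp s" unfolding W_def msum_def by blast
      have "u = \<phi> c + \<phi> d" using cd(1) linear_add[OF Inn_linear[OF ph]] by simp
      moreover have "\<phi> c \<in> Cx x" using Cx_inv[OF ph] cd(2) by blast
      moreover have "\<phi> d \<in> Wp s" using Inn_Wp[OF ph cd(3)] .
      ultimately show "u \<in> W" unfolding W_def msum_def by blast
    qed
  qed
qed

theorem proposition3p25:
  fixes x :: "('n::finite) jac"
  assumes "x \<in> hsp"
    and "pointed (Cx x)"
  shows "\<exists>W. W \<subseteq> hsp \<and> x \<in> W \<and> closed W \<and> convex_cone W \<and> pointed W
            \<and> span W = hsp \<and> (\<forall>\<phi>\<in>(Inn :: ('n jac \<Rightarrow> 'n jac) set). \<phi> ` W \<subseteq> W)"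
proof (cases "\<exists>b. Qf x b \<noteq> 0")
  case True
  then obtain b where b: "Qf x b \<noteq> 0" by blast
  define s where "s = sgn (Qf x b)"
  have s: "s = 1 \<or> s = -1" using b by (simp add: s_def sgn_if)
  have se: "s *\<^sub>R e1 \<in> Cx x" unfolding s_def by (rule Cx_sgn[OF assms(1) b])
  have xP: "x \<in> Pc s"
  proof -
    have "0 \<le> s * Qf x y" for y
    proof (rule ccontr)
      assume "\<not> 0 \<le> s * Qf x y"
      then have y0: "Qf x y \<noteq> 0" and sy: "sgn (Qf x y) = - s" using s by (auto simp: sgn_if split: if_splits)
      have "(- s) *\<^sub>R e1 \<in> Cx x" using Cx_sgn[OF assms(1) y0] sy by simp
      then have "s *\<^sub>R (e1::'n jac) = 0" using pointed_imp[OF Cx_cone assms(2) se] by simp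
      then show False using s by (auto simp: e1_def zero_prod_def)
    qed
    then show ?thesis using assms(1) by (simp add: Pc_def)
  qed
  show ?thesis by (rule sum_good[OF s assms(1) xP se assms(2)])
next
  case False
  then have Q0: "\<forall>y. Qf x y = 0" by blast
  obtain z v X where xe: "x = (z, v, X)" by (metis prod.exhaust)
  have X0: "X = 0" using Qf_zero_X[OF assms(1) Q0] xe by simp
  have v0: "v = 0"
  proof (rule ccontr)
    assume "v \<noteq> 0"
    then obtain c where c: "c \<noteq> 0" "c *\<^sub>R e1 \<in> Cx x" "- (c *\<^sub>R e1) \<in> Cx x"
      using Cx_X0[of v z] xe X0 by blast
    then have "c *\<^sub>R (e1::'n jac) = 0" using pointed_imp[OF Cx_cone assms(2)] by blast
    then show False using c(1) by (simp add: e1_def zero_prod_def)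
  qed
  define s :: real where "s = (if z \<ge> 0 then 1 else -1)"
  have s: "s = 1 \<or> s = -1" by (simp add: s_def)
  have "x \<in> Wp s"
    using assms(1) by (simp add: Wp_def xe X0 v0 Hval_expand Qf_def omega_def s_def)
  then show ?thesis by (rule Wp_good[OF s])
qed


end
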